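(* The sets $R_s$, $R_b$, $R_t$ are non-empty. Moreover: (i) $R_s$ contains a neighborhood (relative to $[0,1]^2$) of $\boldsymbol h=(h_1,h_2)$; (ii) $R_b\cap([h_1,1]\times[h_2,1])=\emptyset$; for every $m_1\in[0,1]$ there is $\delta>0$ with $(m_1,\epsilon)\in R_b$ for all $\epsilon\in[0,\delta)$; and for every $m_2\in[0,1]$ there is $\delta>0$ with $(\epsilon,m_2)\in R_b$ for all $\epsilon\in[0,\delta)$; (iii) $R_t\cap([0,h_1)\times[0,h_2))=\emptyset$, and there is $\delta>0$ such that $(1-\epsilon,1-\epsilon)\in R_t$ for all $\epsilon\in[0,\delta)$.
   Context: Fix a cumulative distribution function $F$ on $[0,1]^2$ with a density $f$ that has full support on $[0,1]^2$, a constant $c\in(0,1)$ and $\boldsymbol h=(h_1,h_2)\in(0,1)^2$. For $\boldsymbol x,\boldsymbol y\in[0,1]^2$ write $\boldsymbol x\vee\boldsymbol y=(\max\{x_1,y_1\},\max\{x_2,y_2\})$, and for $F(\boldsymbol x)<1$ let $n(\boldsymbol x)=\frac{1}{c(1-F(\boldsymbol x))}$. For $\boldsymbol m\in[0,1]^2$ define $\bar w_s=F(\boldsymbol h)$, $\bar w_b=n(\boldsymbol m)\big(F(\boldsymbol m\vee\boldsymbol h)-F(\boldsymbol m)\big)$ (with $\bar w_b:=0$ if $F(\boldsymbol m)=1$), $\bar w_t=F(\boldsymbol m\vee\boldsymbol h)-F(\boldsymbol m)/n(\boldsymbol h)$, and the regions $R_s=\{\boldsymbol m\in[0,1]^2:\bar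 w_s\ge\max\{\bar w_b,\bar w_t\}\}$, $R_b=\{\boldsymbol m:\bar w_b>\max\{\bar w_s,\bar w_t\}\}$, $R_t=[0,1]^2\setminus(R_s\cup R_b)$. (Interpretation: these are the maximal wages that single-layer, bottom-automated and top-automated firms can pay when machines rent at $F(\boldsymbol m)$.) *)

theory Defs
  imports "HOL-Analysis.Analysis"
begin

definition unit_sq :: "(real \<times> real) set" where
  "unit_sq = cbox (0,0) (1,1)"

definition pjoin :: "real \<times> real \<Rightarrow> real \<times> real \<Rightarrow> real \<times> real" where
  "pjoin x y = (max (fst x) (fst y), max (snd x) (snd y))"

definition is_density_cdf ::
  "(real \<times> real \<Rightarrow> real) \<Rightarrow> (real \<times> real \<Rightarrow> real) \<Rightarrow> bool" where
  "is_density_cdf F f \<longleftrightarrow>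
     f integrable_on unit_sq \<and>
     (\<forall>x\<in>unit_sq. 0 \<le> f x) \<and>
     integral unit_sq f = 1 \<and>
     (\<forall>x\<in>unit_sq. F x = integral (cbox (0,0) x) f)"

definition full_support :: "(real \<times> real \<Rightarrow> real) \<Rightarrow> bool" where
  "full_support f \<longleftrightarrow>
     (\<forall>a\<in>unit_sq. \<forall>b\<in>unit_sq. fst a < fst b \<and> snd a < snd b \<longrightarrow>
        integral (cbox a b) f > 0)"

definition nfun :: "(real \<times> real \<Rightarrow> real) \<Rightarrow> real \<Rightarrow> real \<times> real \<Rightarrow> real" where
  "nfun F c x = 1 / (c * (1 - F x))"

definition w_s :: "(real \<times> real \<Rightarrow> real) \<Rightarrow> real \<times> real \<Rightarrow> real" where
  "w_s F h = F h"

definition w_b :: "(real \<times> real \<Rightarrow> real) \<Rightarrow> real \<Rightarrow> real \<times> real \<Rightarrow> real \<times> real \<Rightarrow> real" where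
  "w_b F c h m = (if F m = 1 then 0 else nfun F c m * (F (pjoin m h) - F m))"

definition w_t :: "(real \<times> real \<Rightarrow> real) \<Rightarrow> real \<Rightarrow> real \<times> real \<Rightarrow> real \<times> real \<Rightarrow> real" where
  "w_t F c h m = F (pjoin m h) - F m / nfun F c h"

definition R_s :: "(real \<times> real \<Rightarrow> real) \<Rightarrow> real \<Rightarrow> real \<times> real \<Rightarrow> (real \<times> real) set" where
  "R_s F c h = {m\<in>unit_sq. w_s F h \<ge> max (w_b F c h m) (w_t F c h m)}"

definition R_b :: "(real \<times> real \<Rightarrow> real) \<Rightarrow> real \<Rightarrow> real \<times> real \<Rightarrow> (real \<times> real) set" where
  "R_b F c h = {m\<in>unit_sq. w_b F c h m > max (w_s F h) (w_t F c h m)}"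

definition R_t :: "(real \<times> real \<Rightarrow> real) \<Rightarrow> real \<Rightarrow> real \<times> real \<Rightarrow> (real \<times> real) set" where
  "R_t F c h = unit_sq - (R_s F c h \<union> R_b F c h)"

end

theory Submission
  imports Defs
begin


lemma unit_sq_eq: "unit_sq = {0..1} \<times> {0..1}"
  unfolding unit_sq_def by (simp add: cbox_Pair_eq)

lemma cbox0_eq: "cbox (0,0) (x::real\<times>real) = {0..fst x} \<times> {0..snd x}"
  by (cases x) (simp add: cbox_Pair_eq box_real)

lemma F_int_sub:
  assumes "is_density_cdf F f" "x \<in> unit_sq"
  shows "f integrable_on cbox (0,0) x"
proof -
  have "f integrable_on cbox (0,0) (1,1)" using assms unfolding is_density_cdf_def unit_sq_def by auto
  moreover have "cbox (0,0) x \<subseteq> cbox (0,0) (1,1)" using assms(2)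
    unfolding cbox0_eq unit_sq_def[symmetric] unit_sq_eq by auto
  ultimately show ?thesis by (metis integrable_on_subcbox)
qed

lemma F_nonneg:
  assumes "is_density_cdf F f" "x \<in> unit_sq"
  shows "0 \<le> F x"
proof -
  have "\<forall>y\<in>cbox (0,0) x. 0 \<le> f y" using assms
    unfolding is_density_cdf_def cbox0_eq unit_sq_eq by auto
  then show ?thesis using assms F_int_sub[OF assms] unfolding is_density_cdf_def
    by (simp add: integral_nonneg)
qed

lemma F_mono:
  assumes "is_density_cdf F f" "x \<in> unit_sq" "y \<in> unit_sq" "fst x \<le> fst y" "snd x \<le> snd y"
  shows "F x \<le> F y"
proof -
  have "\<forall>z\<in>cbox (0,0) y. 0 \<le> f z" using assms
    unfolding is_density_cdf_def cbox0_eq unit_sq_eq by auto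
  moreover have "cbox (0,0) x \<subseteq> cbox (0,0) y" using assms unfolding cbox0_eq by auto
  ultimately show ?thesis using assms F_int_sub[OF assms(1,2)] F_int_sub[OF assms(1,3)]
    unfolding is_density_cdf_def by (simp add: integral_subset_le)
qed

lemma F_one: "is_density_cdf F f \<Longrightarrow> F (1,1) = 1"
  unfolding is_density_cdf_def unit_sq_def by auto

lemma F_zero1: "is_density_cdf F f \<Longrightarrow> a \<in> {0..1} \<Longrightarrow> F (a,0) = 0"
  unfolding is_density_cdf_def unit_sq_def by (auto simp: content_Pair)

lemma F_zero2: "is_density_cdf F f \<Longrightarrow> a \<in> {0..1} \<Longrightarrow> F (0,a) = 0"
  unfolding is_density_cdf_def unit_sq_def by (auto simp: content_Pair)

lemma F_cont:
  assumes "is_density_cdf F f"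
  shows "continuous_on unit_sq F"
  unfolding continuous_on_iff
proof (intro ballI allI impI)
  fix x e assume x: "x \<in> unit_sq" and e: "(0::real) < e"
  have fi: "f integrable_on cbox (0,0) (1,1)" using assms unfolding is_density_cdf_def unit_sq_def by auto
  have z: "(0,0) \<in> cbox (0::real,0::real) (1,1)" by auto
  obtain d where d: "0 < d" "\<And>c' d'. \<lbrakk>c' \<in> cbox (0,0) (1,1); d' \<in> cbox (0,0) (1,1); norm(c' - (0,0)) \<le> d; norm(d' - x) \<le> d\<rbrakk>
                        \<Longrightarrow> norm(integral(cbox c' d') f - integral(cbox (0,0) x) f) < e"
    using indefinite_integral_continuous[OF fi z x[unfolded unit_sq_def] e] by blast
  show "\<exists>d>0. \<forall>x'\<in>unit_sq. dist x' x < d \<longrightarrow> dist (F x') (F x) < e"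
  proof (intro exI[of _ d] conjI ballI impI)
    fix y assume y: "y \<in> unit_sq" "dist y x < d"
    have "norm(integral(cbox (0,0) y) f - integral(cbox (0,0) x) f) < e"
      using d(2)[of "(0,0)" y] y x d(1) unfolding unit_sq_def by (auto simp: dist_norm)
    then show "dist (F y) (F x) < e" using assms x y unfolding is_density_cdf_def by (simp add: dist_norm)
  qed (rule d(1))
qed

lemma F_h_pos:
  assumes "is_density_cdf F f" "full_support f" "0 < fst h" "fst h < 1" "0 < snd h" "snd h < 1"
  shows "0 < F h"
proof -
  have "h \<in> unit_sq" using assms unfolding unit_sq_eq by (auto simp: mem_Times_iff)
  moreover have "(0,0) \<in> unit_sq" unfolding unit_sq_eq by auto
  ultimately have "integral (cbox (0,0) h) f > 0" using assms(2,3,5) unfolding full_support_def by auto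
  then show ?thesis using assms(1) \<open>h \<in> unit_sq\<close> unfolding is_density_cdf_def by auto
qed



lemma alg_i:
  fixes a c x y :: real
  assumes a: "0<a" "a<1" and c: "0<c" "c<1" and x0: "0 \<le> x"
    and hx: "\<bar>x-a\<bar> < a*c*(1-a)/4" and hy: "\<bar>y-a\<bar> < a*c*(1-a)/4"
  shows "(if x=1 then 0 else 1/(c*(1-x))*(y-x)) \<le> a \<and> y - x/(1/(c*(1-a))) \<le> a"
proof -
  define k where "k = c*(1-a)"
  have k0: "0 < k" unfolding k_def using a c by simp
  have k1: "k \<le> 1-a" unfolding k_def using a c by (intro mult_left_le_one_le) auto
  have k2: "k \<le> 1" using k1 a by linarith
  define \<eta> where "\<eta> = a*k/4"
  have eta: "a*c*(1-a)/4 = \<eta>" unfolding \<eta>_def k_def by simp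
  have hx': "\<bar>x-a\<bar> < \<eta>" and hy': "\<bar>y-a\<bar> < \<eta>" using hx hy eta by auto
  have hx2: "x - a < \<eta>" "a - x < \<eta>" and hy2: "y - a < \<eta>" "a - y < \<eta>" using hx' hy' by (auto simp: abs_less_iff)
  have ak: "a*k \<le> k" using a k0 by (intro mult_left_le_one_le) auto
  have "a*k \<le> 1-a" using ak k1 by linarith
  then have e1: "\<eta> \<le> (1-a)/4" unfolding \<eta>_def by (simp add: divide_right_mono)
  have eta0: "0 \<le> \<eta>" unfolding \<eta>_def using a k0 by simp
  have xk: "x*k \<ge> (a-\<eta>)*k" using hx2 k0 by (intro mult_right_mono) auto
  have xk2: "(a-\<eta>)*k = a*k - \<eta>*k" by (simp add: algebra_simps)
  have ek: "\<eta>*k \<le> \<eta>" using eta0 k0 k2 by (intro mult_right_le_one_le) auto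
  have ak4: "a*k = 4*\<eta>" unfolding \<eta>_def by simp
  have t: "y - x/(1/(c*(1-a))) = y - x*k" unfolding k_def by simp
  have "y - x*k \<le> a" using xk xk2 ek ak4 hy2 hx2 by linarith
  then have wt: "y - x/(1/(c*(1-a))) \<le> a" unfolding t .
  have wb: "(if x=1 then 0 else 1/(c*(1-x))*(y-x)) \<le> a"
  proof (cases "x=1")
    case True then show ?thesis using a by simp
  next
    case False
    have x1: "1 - x \<ge> 3*(1-a)/4" using hx2 e1 by argo
    have pos: "0 < c*(1-x)" using x1 a c by (intro mult_pos_pos) auto
    have "a*(c*(1-x)) \<ge> a*(c*(3*(1-a)/4))" using x1 a c by (intro mult_left_mono) auto
    also have "a*(c*(3*(1-a)/4)) = 3*\<eta>" unfolding \<eta>_def k_def by simp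
    finally have "y - x \<le> a*(c*(1-x))" using hx2 hy2 eta0 by linarith
    then have "(y-x)/(c*(1-x)) \<le> a" using pos by (simp add: divide_le_eq mult.commute)
    then show ?thesis using False by simp
  qed
  show ?thesis using wb wt by simp
qed

lemma alg_ii:
  fixes a c x G :: real
  assumes a: "0<a" "a<1" and c: "0<c" "c<1" and G: "a \<le> G" and x0: "0 \<le> x" and hx: "x < (1-c)*a/2"
  shows "(if x=1 then 0 else 1/(c*(1-x))*(G-x)) > max a (G - x/(1/(c*(1-a))))"
proof -
  have ca: "(1-c)*a \<le> a" using a c by (intro mult_left_le_one_le) auto
  have x1: "x < 1" using hx ca a by linarith
  have caG: "(1-c)*a \<le> (1-c)*G" using G c by (intro mult_left_mono) auto
  have ca0: "0 < (1-c)*a" using a c by simp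
  have xc: "x < (1-c)*G" using hx caG ca0 by linarith
  have cG: "c*a \<le> c*G" using G c by (intro mult_left_mono) auto
  have exp: "(1-c)*G = G - c*G" by (simp add: algebra_simps)
  have "0 < c*a" using a c by simp
  then have Gx: "0 < G - x" using xc exp cG by linarith
  have pos: "0 < c*(1-x)" "c*(1-x) \<le> c" using x1 c x0 by auto
  have lb: "(G-x)/c \<le> (G-x)/(c*(1-x))" using pos Gx c by (intro divide_left_mono) auto
  have "a*c < G - x" using xc exp cG by (simp add: mult.commute) 
  then have "(G-x)/c > a" using c by (simp add: pos_less_divide_eq)
  moreover have "(G-x)/c > G - x/(1/(c*(1-a)))"
  proof -
    have "x/(1/(c*(1-a))) \<ge> 0" using x0 a c by simp
    moreover have "G*c < G - x" using xc exp by (simp add: mult.commute)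
    then have "(G-x)/c > G" using c by (simp add: pos_less_divide_eq)
    ultimately show ?thesis by linarith
  qed
  ultimately show ?thesis using lb x1 by auto
qed

lemma alg_iii:
  fixes a c x :: real
  assumes a: "0<a" "a<1" and c: "0<c" "c<1" and hx: "x > 1 - ((1 - c*(1-a)) - a)/2" and x1: "x \<le> 1"
  shows "max a (if x=1 then 0 else 1/(c*(1-x))*(x-x)) < x - x/(1/(c*(1-a)))"
proof -
  define k where "k = 1 - c*(1-a)"
  have ca: "0 \<le> c*(1-a)" using a c by simp
  have ca2: "c*(1-a) < 1*(1-a)" using a c by (intro mult_strict_right_mono) auto
  have ca3: "c*(1-a) < 1-a" using ca2 by simp
  have k1: "k \<le> 1" "a < k" "0 < k" unfolding k_def using ca ca3 a by linarith+
  have e: "x - x/(1/(c*(1-a))) = x*k" unfolding k_def by (simp add: algebra_simps)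
  have hx': "x > 1 - (k-a)/2" using hx unfolding k_def .
  have "x*k \<ge> (1 - (k-a)/2)*k" using hx' k1 by (intro mult_right_mono) auto
  moreover have "(1 - (k-a)/2)*k = k - ((k-a)*k)/2" by (simp add: algebra_simps)
  moreover have "(k-a)*k \<le> k-a" using k1 by (intro mult_right_le_one_le) auto
  ultimately have "x*k > a" using k1 by linarith
  then show ?thesis using e a by auto
qed

lemma cont_pt:
  assumes "continuous_on S (g :: real\<times>real \<Rightarrow> real)" "p \<in> S" "0 < \<eta>"
  shows "\<exists>d>0. \<forall>y\<in>S. dist y p < d \<longrightarrow> \<bar>g y - g p\<bar> < \<eta>"
  using assms unfolding continuous_on_iff dist_real_def by blast

context
  fixes F f :: "real \<times> real \<Rightarrow> real" and c :: real and h :: "real \<times> real"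
  assumes A: "is_density_cdf F f"
    and FS: "full_support f"
    and c0: "0 < c" and c1: "c < 1"
    and h1: "0 < fst h" "fst h < 1" and h2: "0 < snd h" "snd h < 1"
begin

lemma hS: "h \<in> unit_sq" using h1 h2 unfolding unit_sq_eq by (auto simp: mem_Times_iff)

lemma Fh_pos: "0 < F h" using F_h_pos[OF A FS h1 h2] .

lemma Fh_lt1: "F h < 1"
proof -
  have fi: "f integrable_on cbox (0,0) (1,1)" using A unfolding is_density_cdf_def unit_sq_def by auto
  have B: "(1::real,0::real) \<in> Basis" by (simp add: Basis_prod_def)
  have sp: "integral (cbox (0,0) (1,1)) f =
           integral (cbox (0,0) (1,1) \<inter> {x. x\<bullet>(1,0) \<le> fst h}) f +
           integral (cbox (0,0) (1,1) \<inter> {x. x\<bullet>(1,0) \<ge> fst h}) f"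
    by (rule integral_split[OF fi B])
  have s1: "cbox (0,0) (1,1) \<inter> {x. x\<bullet>(1::real,0::real) \<le> fst h} = cbox (0,0) (fst h, 1)"
    using h1 by (auto simp: cbox_Pair_eq box_real inner_prod_def mem_Times_iff)
  have s2: "cbox (0,0) (1,1) \<inter> {x. x\<bullet>(1::real,0::real) \<ge> fst h} = cbox (fst h, 0) (1, 1)"
    using h1 by (auto simp: cbox_Pair_eq box_real inner_prod_def mem_Times_iff)
  have p1: "(fst h, 1) \<in> unit_sq" using h1 unfolding unit_sq_eq by auto
  have p2: "(fst h, 0) \<in> unit_sq" "(1,1) \<in> unit_sq" using h1 unfolding unit_sq_eq by auto
  have pos: "integral (cbox (fst h, 0) (1, 1)) f > 0"
    using FS p2 h1 unfolding full_support_def by auto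
  have Fp: "F (fst h, 1) = integral (cbox (0,0) (fst h, 1)) f"
    using A p1 unfolding is_density_cdf_def by auto
  have one: "integral (cbox (0,0) (1,1)) f = 1" using A unfolding is_density_cdf_def unit_sq_def by auto
  have "F h \<le> F (fst h, 1)" using F_mono[OF A hS p1] h2 by auto
  then show ?thesis using sp[unfolded s1 s2] pos Fp one by linarith
qed

lemma pj_S: "m \<in> unit_sq \<Longrightarrow> pjoin m h \<in> unit_sq"
  using hS unfolding unit_sq_eq pjoin_def by (auto simp: mem_Times_iff)

lemma cont2: "continuous_on unit_sq (\<lambda>m. F (pjoin m h))"
proof (rule continuous_on_compose2[OF F_cont[OF A]])
  show "continuous_on unit_sq (\<lambda>m. pjoin m h)" unfolding pjoin_def by (intro continuous_intros)
  show "(\<lambda>m. pjoin m h) ` unit_sq \<subseteq> unit_sq" using pj_S by auto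
qed

lemma wb_eq: "w_b F c h m = (if F m = 1 then 0 else 1/(c*(1-F m))*(F (pjoin m h) - F m))"
  unfolding w_b_def nfun_def by simp

lemma wt_eq: "w_t F c h m = F (pjoin m h) - F m/(1/(c*(1-F h)))"
  unfolding w_t_def nfun_def by simp

lemma part_i: "\<exists>e>0. ball h e \<inter> unit_sq \<subseteq> R_s F c h"
proof -
  define \<eta> where "\<eta> = F h * c * (1 - F h) / 4"
  have eta: "0 < \<eta>" unfolding \<eta>_def using Fh_pos Fh_lt1 c0 by simp
  obtain d1 where d1: "d1 > 0" "\<forall>y\<in>unit_sq. dist y h < d1 \<longrightarrow> \<bar>F y - F h\<bar> < \<eta>"
    using cont_pt[OF F_cont[OF A] hS eta] by blast
  obtain d2 where d2: "d2 > 0" "\<forall>y\<in>unit_sq. dist y h < d2 \<longrightarrow> \<bar>F (pjoin y h) - F (pjoin h h)\<bar> < \<eta>"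
    using cont_pt[OF cont2 hS eta] by blast
  have hh: "pjoin h h = h" unfolding pjoin_def by simp
  show ?thesis
  proof (intro exI[of _ "min d1 d2"] conjI subsetI)
    show "0 < min d1 d2" using d1 d2 by simp
    fix m assume m: "m \<in> ball h (min d1 d2) \<inter> unit_sq"
    then have mS: "m \<in> unit_sq" and dm: "dist m h < d1" "dist m h < d2" by (auto simp: dist_commute)
    have x: "\<bar>F m - F h\<bar> < \<eta>" using d1 mS dm by auto
    have y: "\<bar>F (pjoin m h) - F h\<bar> < \<eta>" using d2 mS dm hh by auto
    have "(if F m=1 then 0 else 1/(c*(1-F m))*(F (pjoin m h)-F m)) \<le> F h \<and> F (pjoin m h) - F m/(1/(c*(1-F h))) \<le> F h"
      using alg_i[OF Fh_pos Fh_lt1 c0 c1 F_nonneg[OF A mS]] x y unfolding \<eta>_def by blast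
    then show "m \<in> R_s F c h" using mS unfolding R_s_def wb_eq wt_eq w_s_def by auto
  qed
qed

lemma part_ii_a: "R_b F c h \<inter> ({fst h..1} \<times> {snd h..1}) = {}"
proof (rule ccontr)
  assume "R_b F c h \<inter> ({fst h..1} \<times> {snd h..1}) \<noteq> {}"
  then obtain m where m: "m \<in> R_b F c h" "m \<in> {fst h..1} \<times> {snd h..1}" by blast
  have "pjoin m h = m" using m(2) unfolding pjoin_def by (cases m) (auto simp: max_def)
  then have "w_b F c h m = 0" unfolding wb_eq by simp
  moreover have "w_b F c h m > F h" using m(1) unfolding R_b_def w_s_def by auto
  ultimately show False using Fh_pos by simp
qed

lemma part_ii_b: "m1 \<in> {0..1} \<Longrightarrow> \<exists>\<delta>>0. \<forall>\<epsilon>. 0 \<le> \<epsilon> \<and> \<epsilon> < \<delta> \<longrightarrow> (m1, \<epsilon>) \<in> R_b F c h"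
proof -
  assume m1: "m1 \<in> {0..1}"
  define \<eta> where "\<eta> = (1-c) * F h / 2"
  have eta: "0 < \<eta>" unfolding \<eta>_def using Fh_pos c1 by simp
  have pS: "(m1, 0) \<in> unit_sq" using m1 unfolding unit_sq_eq by auto
  obtain d where d: "d > 0" "\<forall>y\<in>unit_sq. dist y (m1,0) < d \<longrightarrow> \<bar>F y - F (m1,0)\<bar> < \<eta>"
    using cont_pt[OF F_cont[OF A] pS eta] by blast
  have F0: "F (m1,0) = 0" using F_zero1[OF A m1] .
  show ?thesis
  proof (intro exI[of _ "min d (snd h)"] conjI allI impI)
    show "0 < min d (snd h)" using d h2 by simp
    fix \<epsilon> :: real assume e: "0 \<le> \<epsilon> \<and> \<epsilon> < min d (snd h)"
    have yS: "(m1, \<epsilon>) \<in> unit_sq" using e m1 h2 unfolding unit_sq_eq by auto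
    have "dist (m1, \<epsilon>) (m1, 0) = \<bar>\<epsilon>\<bar>" by (simp add: dist_Pair_Pair dist_real_def)
    then have "dist (m1, \<epsilon>) (m1, 0) < d" using e by simp
    then have x: "\<bar>F (m1,\<epsilon>)\<bar> < \<eta>" using d yS F0 by auto
    have x0: "0 \<le> F (m1,\<epsilon>)" using F_nonneg[OF A yS] .
    have pj: "pjoin (m1, \<epsilon>) h = (max m1 (fst h), snd h)" using e unfolding pjoin_def by auto
    have gS: "(max m1 (fst h), snd h) \<in> unit_sq" using m1 h1 h2 unfolding unit_sq_eq by auto
    have G: "F h \<le> F (max m1 (fst h), snd h)" using F_mono[OF A hS gS] by auto
    have "(if F (m1,\<epsilon>)=1 then 0 else 1/(c*(1-F (m1,\<epsilon>)))*(F (max m1 (fst h), snd h) - F (m1,\<epsilon>)))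
          > max (F h) (F (max m1 (fst h), snd h) - F (m1,\<epsilon>)/(1/(c*(1-F h))))"
      using alg_ii[OF Fh_pos Fh_lt1 c0 c1 G x0] x x0 unfolding \<eta>_def by auto
    then have "w_b F c h (m1, \<epsilon>) > max (w_s F h) (w_t F c h (m1, \<epsilon>))" unfolding wb_eq wt_eq w_s_def pj .
    then show "(m1, \<epsilon>) \<in> R_b F c h" using yS unfolding R_b_def by auto
  qed
qed

lemma part_ii_c: "m2 \<in> {0..1} \<Longrightarrow> \<exists>\<delta>>0. \<forall>\<epsilon>. 0 \<le> \<epsilon> \<and> \<epsilon> < \<delta> \<longrightarrow> (\<epsilon>, m2) \<in> R_b F c h"
proof -
  assume m2: "m2 \<in> {0..1}"
  define \<eta> where "\<eta> = (1-c) * F h / 2"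
  have eta: "0 < \<eta>" unfolding \<eta>_def using Fh_pos c1 by simp
  have pS: "(0, m2) \<in> unit_sq" using m2 unfolding unit_sq_eq by auto
  obtain d where d: "d > 0" "\<forall>y\<in>unit_sq. dist y (0,m2) < d \<longrightarrow> \<bar>F y - F (0,m2)\<bar> < \<eta>"
    using cont_pt[OF F_cont[OF A] pS eta] by blast
  have F0: "F (0,m2) = 0" using F_zero2[OF A m2] .
  show ?thesis
  proof (intro exI[of _ "min d (fst h)"] conjI allI impI)
    show "0 < min d (fst h)" using d h1 by simp
    fix \<epsilon> :: real assume e: "0 \<le> \<epsilon> \<and> \<epsilon> < min d (fst h)"
    have yS: "(\<epsilon>, m2) \<in> unit_sq" using e m2 h1 unfolding unit_sq_eq by auto
    have "dist (\<epsilon>, m2) (0, m2) = \<bar>\<epsilon>\<bar>" by (simp add: dist_Pair_Pair dist_real_def)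
    then have "dist (\<epsilon>, m2) (0, m2) < d" using e by simp
    then have x: "\<bar>F (\<epsilon>, m2)\<bar> < \<eta>" using d yS F0 by auto
    have x0: "0 \<le> F (\<epsilon>, m2)" using F_nonneg[OF A yS] .
    have pj: "pjoin (\<epsilon>, m2) h = (fst h, max m2 (snd h))" using e unfolding pjoin_def by auto
    have gS: "(fst h, max m2 (snd h)) \<in> unit_sq" using m2 h1 h2 unfolding unit_sq_eq by auto
    have G: "F h \<le> F (fst h, max m2 (snd h))" using F_mono[OF A hS gS] by auto
    have "(if F (\<epsilon>, m2)=1 then 0 else 1/(c*(1-F (\<epsilon>, m2)))*(F (fst h, max m2 (snd h)) - F (\<epsilon>, m2)))
          > max (F h) (F (fst h, max m2 (snd h)) - F (\<epsilon>, m2)/(1/(c*(1-F h))))"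
      using alg_ii[OF Fh_pos Fh_lt1 c0 c1 G x0] x x0 unfolding \<eta>_def by auto
    then have "w_b F c h (\<epsilon>, m2) > max (w_s F h) (w_t F c h (\<epsilon>, m2))" unfolding wb_eq wt_eq w_s_def pj .
    then show "(\<epsilon>, m2) \<in> R_b F c h" using yS unfolding R_b_def by auto
  qed
qed

lemma part_iii_a: "R_t F c h \<inter> ({0..<fst h} \<times> {0..<snd h}) = {}"
proof (rule ccontr)
  assume "R_t F c h \<inter> ({0..<fst h} \<times> {0..<snd h}) \<noteq> {}"
  then obtain m where m: "m \<in> R_t F c h" "m \<in> {0..<fst h} \<times> {0..<snd h}" by blast
  have mS: "m \<in> unit_sq" and nS: "m \<notin> R_s F c h" and nB: "m \<notin> R_b F c h"
    using m(1) unfolding R_t_def by auto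
  have pj: "pjoin m h = h" using m(2) unfolding pjoin_def by (cases m) (auto simp: max_def)
  have x0: "0 \<le> F m" using F_nonneg[OF A mS] .
  have xa: "F m \<le> F h" using F_mono[OF A mS hS] m(2) by (cases m) auto
  have x1: "F m \<noteq> 1" using xa Fh_lt1 by simp
  define k where "k = c*(1-F h)"
  have k0: "0 < k" unfolding k_def using c0 Fh_lt1 by simp
  have wt: "w_t F c h m = F h - F m * k" unfolding wt_eq pj k_def by simp
  have wb: "w_b F c h m = (F h - F m)/(c*(1-F m))" unfolding wb_eq pj using x1 by simp
  have pos: "0 < c*(1-F m)" using c0 xa Fh_lt1 by simp
  show False
  proof (cases "F m = 0")
    case True
    then have "w_b F c h m = F h / c" using wb by simp
    moreover have "F h / c > F h" using Fh_pos c0 c1 by (simp add: less_divide_eq)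
    ultimately have "w_b F c h m > max (w_s F h) (w_t F c h m)" using wt True unfolding w_s_def by simp
    then show False using nB mS unfolding R_b_def by auto
  next
    case False
    then have "F m * k > 0" using x0 k0 by simp
    then have "w_t F c h m < w_s F h" using wt unfolding w_s_def by simp
    moreover have "\<not> w_s F h \<ge> max (w_b F c h m) (w_t F c h m)" using nS mS unfolding R_s_def by auto
    ultimately have "w_b F c h m > max (w_s F h) (w_t F c h m)" by auto
    then show False using nB mS unfolding R_b_def by auto
  qed
qed

lemma part_iii_b: "\<exists>\<delta>>0. \<forall>\<epsilon>. 0 \<le> \<epsilon> \<and> \<epsilon> < \<delta> \<longrightarrow> (1 - \<epsilon>, 1 - \<epsilon>) \<in> R_t F c h"
proof -
  define \<eta> where "\<eta> = ((1 - c*(1-F h)) - F h)/2"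
  have ca3: "c*(1-F h) < 1*(1-F h)" using Fh_lt1 c1 by (intro mult_strict_right_mono) auto
  have eta: "0 < \<eta>" unfolding \<eta>_def using ca3 by simp
  have pS: "(1, 1) \<in> unit_sq" unfolding unit_sq_eq by auto
  obtain d where d: "d > 0" "\<forall>y\<in>unit_sq. dist y (1,1) < d \<longrightarrow> \<bar>F y - F (1,1)\<bar> < \<eta>"
    using cont_pt[OF F_cont[OF A] pS eta] by blast
  have F1: "F (1,1) = 1" using F_one[OF A] .
  show ?thesis
  proof (intro exI[of _ "min (d/2) (min (1 - fst h) (1 - snd h))"] conjI allI impI)
    show "0 < min (d/2) (min (1 - fst h) (1 - snd h))" using d h1 h2 by simp
    fix \<epsilon> :: real assume e: "0 \<le> \<epsilon> \<and> \<epsilon> < min (d/2) (min (1 - fst h) (1 - snd h))"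
    have yS: "(1-\<epsilon>, 1-\<epsilon>) \<in> unit_sq" using e h1 h2 unfolding unit_sq_eq by auto
    have dd: "dist (1-\<epsilon>, 1-\<epsilon>) (1::real, 1::real) = sqrt (\<epsilon>^2 + \<epsilon>^2)"
      by (simp add: dist_Pair_Pair dist_real_def)
    have "\<epsilon>^2 < (d/2)^2" using e by (intro power_strict_mono) auto
    then have "\<epsilon>^2 * 4 < d^2" by (simp add: power_divide)
    then have "\<epsilon>^2 + \<epsilon>^2 < d^2" using zero_le_power2[of \<epsilon>] by linarith
    then have "sqrt (\<epsilon>^2 + \<epsilon>^2) < d" using d by (intro real_less_lsqrt) auto
    then have x: "\<bar>F (1-\<epsilon>, 1-\<epsilon>) - 1\<bar> < \<eta>" using d yS F1 dd by auto
    have xle: "F (1-\<epsilon>, 1-\<epsilon>) \<le> 1" using F_mono[OF A yS pS] e F1 by auto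
    have pj: "pjoin (1-\<epsilon>, 1-\<epsilon>) h = (1-\<epsilon>, 1-\<epsilon>)" using e unfolding pjoin_def by auto
    have "F (1-\<epsilon>, 1-\<epsilon>) > 1 - \<eta>" using x by (simp add: abs_less_iff)
    then have "max (F h) (if F (1-\<epsilon>, 1-\<epsilon>)=1 then 0 else 1/(c*(1-F (1-\<epsilon>, 1-\<epsilon>)))*(F (1-\<epsilon>, 1-\<epsilon>) - F (1-\<epsilon>, 1-\<epsilon>)))
          < F (1-\<epsilon>, 1-\<epsilon>) - F (1-\<epsilon>, 1-\<epsilon>)/(1/(c*(1-F h)))"
      using alg_iii[OF Fh_pos Fh_lt1 c0 c1 _ xle] unfolding \<eta>_def by blast
    then have "max (w_s F h) (w_b F c h (1-\<epsilon>, 1-\<epsilon>)) < w_t F c h (1-\<epsilon>, 1-\<epsilon>)"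
      unfolding wb_eq wt_eq w_s_def pj .
    then show "(1 - \<epsilon>, 1 - \<epsilon>) \<in> R_t F c h" using yS unfolding R_t_def R_s_def R_b_def by auto
  qed
qed

end

theorem proposition2:
  fixes F f :: "real \<times> real \<Rightarrow> real" and c :: real and h :: "real \<times> real"
  assumes "is_density_cdf F f"
    and "full_support f"
    and "0 < c" and "c < 1"
    and "0 < fst h" and "fst h < 1" and "0 < snd h" and "snd h < 1"
  shows "R_s F c h \<noteq> {} \<and> R_b F c h \<noteq> {} \<and> R_t F c h \<noteq> {}
    \<and> (\<exists>e>0. ball h e \<inter> unit_sq \<subseteq> R_s F c h)
    \<and> R_b F c h \<inter> ({fst h..1} \<times> {snd h..1}) = {}
    \<and> (\<forall>m1\<in>{0..1}. \<exists>\<delta>>0. \<forall>\<epsilon>. 0 \<le> \<epsilon> \<and> \<epsilon> < \<delta> \<longrightarrow> (m1, \<epsilon>) \<in> R_b F c h)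
    \<and> (\<forall>m2\<in>{0..1}. \<exists>\<delta>>0. \<forall>\<epsilon>. 0 \<le> \<epsilon> \<and> \<epsilon> < \<delta> \<longrightarrow> (\<epsilon>, m2) \<in> R_b F c h)
    \<and> R_t F c h \<inter> ({0..<fst h} \<times> {0..<snd h}) = {}
    \<and> (\<exists>\<delta>>0. \<forall>\<epsilon>. 0 \<le> \<epsilon> \<and> \<epsilon> < \<delta> \<longrightarrow> (1 - \<epsilon>, 1 - \<epsilon>) \<in> R_t F c h)"
proof -
  note P = assms
  have i: "\<exists>e>0. ball h e \<inter> unit_sq \<subseteq> R_s F c h" by (rule part_i[OF P])
  have iia: "R_b F c h \<inter> ({fst h..1} \<times> {snd h..1}) = {}" by (rule part_ii_a[OF P])
  have iib: "\<forall>m1\<in>{0..1}. \<exists>\<delta>>0. \<forall>\<epsilon>. 0 \<le> \<epsilon> \<and> \<epsilon> < \<delta> \<longrightarrow> (m1, \<epsilon>) \<in> R_b F c h"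
    using part_ii_b[OF P] by blast
  have iic: "\<forall>m2\<in>{0..1}. \<exists>\<delta>>0. \<forall>\<epsilon>. 0 \<le> \<epsilon> \<and> \<epsilon> < \<delta> \<longrightarrow> (\<epsilon>, m2) \<in> R_b F c h"
    using part_ii_c[OF P] by blast
  have iiia: "R_t F c h \<inter> ({0..<fst h} \<times> {0..<snd h}) = {}" by (rule part_iii_a[OF P])
  have iiib: "\<exists>\<delta>>0. \<forall>\<epsilon>. 0 \<le> \<epsilon> \<and> \<epsilon> < \<delta> \<longrightarrow> (1 - \<epsilon>, 1 - \<epsilon>) \<in> R_t F c h"
    by (rule part_iii_b[OF P])
  have "h \<in> R_s F c h" using i hS[OF P] by auto
  moreover have "(0,0) \<in> R_b F c h" using iib by force
  moreover have "(1,1) \<in> R_t F c h" using iiib by force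
  ultimately show ?thesis using i iia iib iic iiia iiib by blast
qed

end
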